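(* Let $n\ge1$ and $d\in\mathbf D$. If $\ell(d)\ne\ell(r_n(d))$, then $d=j/2^n$ for some integer $j$. In particular, for every $r\in\mathrm{Rot}$ there are only finitely many $d\in\mathbf D$ with $\ell(d)\ne\ell(r(d))$.
   Context: $\mathbf D=\{a/2^n:n\ge1,0\le a\le2^n-1\}\subset[0,1)\cong\mathbf R/\mathbf Z$. A standard dyadic interval (s.d.i.) is $(a/2^k,(a+1)/2^k)$ with $a,k\in\mathbf N$, $(a+1)/2^k\le1$. $\ell:\mathbf D\to\mathbf R$ is $\ell(d)=-\log_2(d'-d)$ where $(d,d')$ is the largest s.d.i. with left endpoint $d$ (e.g. $\ell(0)=0$, $\ell(1/2)=1$, $\ell(1/4)=\ell(3/4)=2$). $r_n$ is the rotation $x\mapsto x+2^{-n}\pmod 1$ of the torus (an element of Thompson's group $T$), and $\mathrm{Rot}=\bigcup_{n\ge1}\langle r_n\rangle$ is the group of rotations by dyadic angles $k/2^n$. *)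

theory Defs
  imports Complex_Main
begin

text \<open>The circle R/Z is represented by [0,1) inside the reals, addition mod 1 via frac.\<close>

definition dyadics :: "real set" where
  "dyadics = {real a / 2 ^ n | a n :: nat. n \<ge> 1 \<and> a \<le> 2 ^ n - 1}"

text \<open>Standard dyadic interval (a/2^k,(a+1)/2^k) is encoded by the pair (a,k).\<close>
definition is_sdi :: "nat \<Rightarrow> nat \<Rightarrow> bool" where
  "is_sdi a k \<longleftrightarrow> (real a + 1) / 2 ^ k \<le> 1"

text \<open>The largest s.d.i. with left endpoint d is the one of least level k;
  ell d = -log2 of its length.\<close>
definition ell :: "real \<Rightarrow> real" where
  "ell d = - log 2 (1 / 2 ^ (LEAST k. \<exists>a. is_sdi a k \<and> real a / 2 ^ k = d))"

definition rot :: "real \<Rightarrow> real \<Rightarrow> real" where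
  "rot t x = frac (x + t)"

definition r :: "nat \<Rightarrow> real \<Rightarrow> real" where
  "r n = rot (1 / 2 ^ n)"

text \<open>Rot = union of the cyclic groups generated by r_n, i.e. rotations by k/2^n.\<close>
definition Rot :: "(real \<Rightarrow> real) set" where
  "Rot = {rot (real_of_int k / 2 ^ n) | k n. n \<ge> 1}"

end

theory Submission
  imports Defs
begin

lemma sdi_iff:
  assumes "0 \<le> x" "x < 1"
  shows "(\<exists>a. is_sdi a k \<and> real a / 2 ^ k = x) \<longleftrightarrow> (2 ^ k * x \<in> \<int>)"
proof
  assume "\<exists>a. is_sdi a k \<and> real a / 2 ^ k = x"
  then obtain a where "real a / 2 ^ k = x" by blast
  then have "2 ^ k * x = real a" by (simp add: field_simps)
  then show "2 ^ k * x \<in> \<int>" by simp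
next
  assume "2 ^ k * x \<in> \<int>"
  then obtain j where j: "2 ^ k * x = real_of_int j" by (auto elim: Ints_cases)
  have "j \<ge> 0" using j assms
    by (metis mult_nonneg_nonneg of_int_0_le_iff zero_le_numeral zero_le_power)
  have "real_of_int j < 2 ^ k" using j assms by (metis mult.right_neutral mult_strict_left_mono zero_less_numeral zero_less_power)
  define a where "a = nat j"
  have ra: "real a = real_of_int j" using \<open>j \<ge> 0\<close> by (simp add: a_def)
  have "real a / 2 ^ k = x" using ra j by (simp add: field_simps)
  moreover have "is_sdi a k"
  proof -
    have "j + 1 \<le> 2 ^ k"
    proof -
      have "real_of_int j < real_of_int (2 ^ k)" using \<open>real_of_int j < 2 ^ k\<close> by simp
      then have "j < 2 ^ k" by linarith
      then show ?thesis by simp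
    qed
    then have "real_of_int (j + 1) \<le> real_of_int (2 ^ k)" by linarith
    then have "real a + 1 \<le> 2 ^ k" using ra by simp
    then show ?thesis unfolding is_sdi_def by simp
  qed
  ultimately show "\<exists>a. is_sdi a k \<and> real a / 2 ^ k = x" by blast
qed

lemma ell_eq:
  assumes "0 \<le> x" "x < 1" "0 \<le> y" "y < 1" "\<And>k. (2 ^ k * x \<in> \<int>) \<longleftrightarrow> (2 ^ k * y \<in> \<int>)"
  shows "ell x = ell y"
proof -
  have "(\<lambda>k. \<exists>a. is_sdi a k \<and> real a / 2 ^ k = x) = (\<lambda>k. \<exists>a. is_sdi a k \<and> real a / 2 ^ k = y)"
    using sdi_iff[OF assms(1,2)] sdi_iff[OF assms(3,4)] assms(5) by auto
  then show ?thesis unfolding ell_def by simp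
qed

lemma up_ints:
  assumes "2 ^ m * (y::real) \<in> \<int>" "m \<le> n"
  shows "2 ^ n * y \<in> \<int>"
proof -
  have n: "n = (n - m) + m" using assms(2) by simp
  have "(2::real) ^ n = 2 ^ (n - m) * 2 ^ m" by (subst n, rule power_add)
  then have "(2::real) ^ n * y = 2 ^ (n - m) * (2 ^ m * y)" by simp
  moreover have "(2::real) ^ (n - m) \<in> \<int>" by simp
  ultimately show ?thesis using assms(1) Ints_mult by metis
qed

lemma frac_ints: "2 ^ m * frac (y::real) \<in> \<int> \<longleftrightarrow> 2 ^ m * y \<in> \<int>"
proof -
  have e: "2 ^ m * y = 2 ^ m * frac y + of_int (2 ^ m * \<lfloor>y\<rfloor>)" by (simp add: frac_def algebra_simps)
  show ?thesis
  proof
    assume "2 ^ m * frac y \<in> \<int>"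
    then show "2 ^ m * y \<in> \<int>" using e by (simp add: Ints_add)
  next
    assume h: "2 ^ m * y \<in> \<int>"
    have "2 ^ m * frac y = 2 ^ m * y - of_int (2 ^ m * \<lfloor>y\<rfloor>)" using e by simp
    then show "2 ^ m * frac y \<in> \<int>" using h by (simp add: Ints_diff)
  qed
qed

lemma ints_shift_iff:
  assumes "x = y + of_int z"
  shows "(x::real) \<in> \<int> \<longleftrightarrow> y \<in> \<int>"
proof
  assume "x \<in> \<int>"
  then have "x - of_int z \<in> \<int>" by (intro Ints_diff) auto
  then show "y \<in> \<int>" using assms by simp
next
  assume "y \<in> \<int>"
  then show "x \<in> \<int>" using assms by (simp add: Ints_add)
qed

lemma shift_ints:
  assumes "2 ^ n * (d::real) \<notin> \<int>"
  shows "2 ^ m * frac (d + real_of_int k / 2 ^ n) \<in> \<int> \<longleftrightarrow> 2 ^ m * d \<in> \<int>"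
proof -
  have A: "2 ^ m * frac (d + real_of_int k / 2 ^ n) \<in> \<int> \<longleftrightarrow> 2 ^ m * (d + real_of_int k / 2 ^ n) \<in> \<int>"
    by (rule frac_ints)
  show ?thesis
  proof (cases "n \<le> m")
    case True
    have "(2::real) ^ m * (real_of_int k / 2 ^ n) = of_int (k * 2 ^ (m - n))"
    proof -
      have "(2::real) ^ m = 2 ^ (m - n) * 2 ^ n" using True by (metis le_add_diff_inverse2 power_add)
      then show ?thesis by simp
    qed
    then have "2 ^ m * (d + real_of_int k / 2 ^ n) = 2 ^ m * d + of_int (k * 2 ^ (m - n))"
      by (simp only: distrib_left)
    then show ?thesis using A ints_shift_iff by blast
  next
    case False
    have e: "(2::real) ^ n * (d + real_of_int k / 2 ^ n) = 2 ^ n * d + of_int k"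
      by (simp add: distrib_left)
    have "2 ^ n * (d + real_of_int k / 2 ^ n) \<notin> \<int>"
      using assms ints_shift_iff[OF e] by blast
    moreover have "m \<le> n" using False by simp
    ultimately have "2 ^ m * (d + real_of_int k / 2 ^ n) \<notin> \<int>" using up_ints by blast
    moreover have "2 ^ m * d \<notin> \<int>" using \<open>m \<le> n\<close> up_ints assms by blast
    ultimately show ?thesis using A by blast
  qed
qed

lemma dyadics_range: "d \<in> dyadics \<Longrightarrow> 0 \<le> d \<and> d < 1"
proof -
  assume "d \<in> dyadics"
  then obtain a n where d: "d = real a / 2 ^ n" "a \<le> 2 ^ n - 1" unfolding dyadics_def by blast
  have "(1::nat) \<le> 2 ^ n" by simp
  then have "a < (2::nat) ^ n" using d(2) by linarith
  then have "real a < 2 ^ n" by (metis of_nat_less_numeral_power_cancel_iff)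
  then have "real a / 2 ^ n < 1" by simp
  moreover have "0 \<le> real a / 2 ^ n" by simp
  ultimately show ?thesis using d(1) by simp
qed

lemma main:
  assumes "d \<in> dyadics" "ell d \<noteq> ell (rot (real_of_int k / 2 ^ n) d)"
  shows "2 ^ n * d \<in> \<int>"
proof (rule ccontr)
  assume h: "2 ^ n * d \<notin> \<int>"
  have "ell d = ell (frac (d + real_of_int k / 2 ^ n))"
    apply (rule ell_eq)
    using dyadics_range[OF assms(1)] shift_ints[OF h, of _ k] frac_lt_1 frac_ge_0 by auto
  then show False using assms(2) unfolding rot_def by simp
qed

theorem proposition3p18:
  shows "(\<forall>n d. n \<ge> 1 \<longrightarrow> d \<in> dyadics \<longrightarrow> ell d \<noteq> ell (r n d)
            \<longrightarrow> (\<exists>j::int. d = real_of_int j / 2 ^ n))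
       \<and> (\<forall>\<rho>\<in>Rot. finite {d \<in> dyadics. ell d \<noteq> ell (\<rho> d)})"
proof (intro conjI allI impI ballI)
  fix n d
  assume "d \<in> dyadics" "ell d \<noteq> ell (r n d)"
  then have "2 ^ n * d \<in> \<int>" using main[of d 1 n] unfolding r_def by simp
  then obtain j where "2 ^ n * d = real_of_int j" by (auto elim: Ints_cases)
  then have "d = real_of_int j / 2 ^ n" by (simp add: field_simps)
  then show "\<exists>j::int. d = real_of_int j / 2 ^ n" by blast
next
  fix \<rho> assume "\<rho> \<in> Rot"
  then obtain k n where rho: "\<rho> = rot (real_of_int k / 2 ^ n)" unfolding Rot_def by blast
  have "{d \<in> dyadics. ell d \<noteq> ell (\<rho> d)} \<subseteq> (\<lambda>j::int. real_of_int j / 2 ^ n) ` {0..2 ^ n}"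
  proof
    fix d assume "d \<in> {d \<in> dyadics. ell d \<noteq> ell (\<rho> d)}"
    then have d: "d \<in> dyadics" "ell d \<noteq> ell (\<rho> d)" by auto
    then have "2 ^ n * d \<in> \<int>" using main rho by blast
    then obtain j where j: "2 ^ n * d = real_of_int j" by (auto elim: Ints_cases)
    have r: "0 \<le> d" "d < 1" using dyadics_range[OF d(1)] by auto
    have "0 \<le> real_of_int j" using j r by (metis mult_nonneg_nonneg zero_le_numeral zero_le_power)
    moreover have "real_of_int j \<le> 2 ^ n" using j r
      by (metis less_eq_real_def mult.right_neutral mult_left_mono zero_le_numeral zero_le_power)
    ultimately have "j \<in> {0..2 ^ n}" by (simp; linarith?)
    moreover have "d = real_of_int j / 2 ^ n" using j by (simp add: field_simps)
    ultimately show "d \<in> (\<lambda>j::int. real_of_int j / 2 ^ n) ` {0..2 ^ n}" by blast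
  qed
  then show "finite {d \<in> dyadics. ell d \<noteq> ell (\<rho> d)}" by (rule finite_subset) simp
qed

end
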